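(* Let $K\ge1$, $N\ge1$, $\sigma>0$ and define the parabolic $r$-prior $$p_r(r\mid\sigma)=\frac{K}{r\sqrt\pi}\left(\frac{Nr^2}{2\sigma^2}\right)^{K/2}U\!\left(\frac{K+1}{2};\frac12;\frac{Nr^2}{2\sigma^2}\right),\qquad r>0.$$ Then for $1-K<\mathrm{Re}\,s<2$, $$\int_0^\infty p_r(r\mid\sigma)\,r^{s-1}\,dr=\left(\frac{\sigma}{\sqrt{2N}}\right)^{s-1}\frac{\Gamma(1-s/2)\,\Gamma(K+s-1)}{\sqrt\pi\,\Gamma(K)}.$$ In particular (taking $s=1$) $p_r(\cdot\mid\sigma)$ is a probability density.
   Context: $U(\alpha;\beta;x)=\frac1{\Gamma(\alpha)}\int_0^\infty e^{-xt}t^{\alpha-1}(1+t)^{\beta-\alpha-1}dt$ is Tricomi's confluent hypergeometric function. *)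

theory Defs
  imports "HOL-Analysis.Analysis"
begin

text \<open>Tricomi's confluent hypergeometric function via its integral representation
  (real arguments; meaningful for a > 0, x > 0).\<close>
definition tricomiU :: "real \<Rightarrow> real \<Rightarrow> real \<Rightarrow> real" where
  "tricomiU a b x = (1 / Gamma a) *
     (LINT t:{0<..}|lborel. exp (- x * t) * t powr (a - 1) * (1 + t) powr (b - a - 1))"

definition parabolic_prior :: "nat \<Rightarrow> nat \<Rightarrow> real \<Rightarrow> real \<Rightarrow> real" where
  "parabolic_prior K N \<sigma> r =
     real K / (r * sqrt pi) * (real N * r^2 / (2 * \<sigma>^2)) powr (real K / 2) *
     tricomiU ((real K + 1) / 2) (1 / 2) (real N * r^2 / (2 * \<sigma>^2))"

end

theory Submission
  imports Defs
begin


lemma lborel_from_lebesgue: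
  fixes f :: "real \<Rightarrow> 'b::euclidean_space"
  assumes "f absolutely_integrable_on S" "(\<lambda>x. indicator S x *\<^sub>R f x) \<in> borel_measurable borel"
  shows "set_integrable lborel S f"
  using assms unfolding set_integrable_def
  by (subst (asm) integrable_completion) (auto simp: measurable_lborel1)

lemma cpow_pos: "x > 0 \<Longrightarrow> complex_of_real x powr w = exp (w * of_real (ln x))"
  by (simp add: powr_def Ln_of_real)

lemma gamma_scaled_complex:
  assumes z: "Re z > 0" and y: "y > 0"
  shows "set_integrable lborel {0<..} (\<lambda>x. complex_of_real x powr (z - 1) * of_real (exp (- x * y)))"
    and "(LINT x:{0<..}|lborel. complex_of_real x powr (z - 1) * of_real (exp (- x * y)))
           = of_real y powr (- z) * Gamma z"
proof -
  define F where "F = (\<lambda>x. complex_of_real x powr (z - 1) * of_real (exp (- x * y)))"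
  define G where "G = (\<lambda>t. complex_of_real t powr (z - 1) / of_real (exp t))"
  have G1: "G absolutely_integrable_on {0<..}" unfolding G_def
    by (rule absolutely_integrable_Gamma_integral'[OF z])
  have G2: "integral {0<..} G = Gamma z" unfolding G_def
    using Gamma_integral_complex'[OF z] by (rule integral_unique)
  have eq: "\<bar>1/y\<bar> *\<^sub>R F (u / y) = of_real y powr (- z) * G u" if "u \<in> {0<..}" for u
  proof -
    have u: "u > 0" using that by simp
    have "\<bar>1/y\<bar> *\<^sub>R F (u / y) = exp (- of_real (ln y)) * (exp ((z - 1) * (of_real (ln u) - of_real (ln y))) * exp (- of_real u))"
    proof -
      have p: "complex_of_real (u/y) powr (z-1) = exp ((z - 1) * (of_real (ln u) - of_real (ln y)))"
        using u y cpow_pos[of "u/y" "z-1"] by (simp add: ln_div)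
      have e: "complex_of_real (exp (- (u / y) * y)) = exp (- of_real u)"
        using y by (simp flip: exp_of_real)
      have i: "\<bar>1/y\<bar> = exp (- ln y)" using y by (simp add: exp_minus divide_inverse)
      show ?thesis unfolding F_def p e i
        by (simp add: scaleR_conv_of_real flip: exp_of_real)
    qed
    also have "\<dots> = exp (- of_real (ln y) + (z - 1) * (of_real (ln u) - of_real (ln y)) + (- of_real u))"
      by (simp only: exp_add mult.assoc)
    also have "- of_real (ln y) + (z - 1) * (of_real (ln u) - of_real (ln y)) + (- of_real u) =
               (- z * of_real (ln y)) + ((z - 1) * of_real (ln u) + (- of_real u))"
      by (simp add: algebra_simps)
    also have "exp \<dots> = exp (- z * of_real (ln y)) * (exp ((z - 1) * of_real (ln u)) * exp (- of_real u))"
      by (simp only: exp_add mult.assoc)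
    also have "\<dots> = of_real y powr (- z) * G u"
      using u y unfolding G_def by (simp add: cpow_pos exp_minus exp_of_real[symmetric] divide_inverse)
    finally show ?thesis .
  qed
  have img: "(\<lambda>u. u / y) ` {0<..} = ({0<..} :: real set)"
    using y by (auto simp: image_iff intro!: bexI[of _ "_ * y"])
  have L: "(\<lambda>u. \<bar>1/y\<bar> *\<^sub>R F (u / y)) absolutely_integrable_on {0<..} \<and>
        integral {0<..} (\<lambda>u. \<bar>1/y\<bar> *\<^sub>R F (u / y)) = of_real y powr (- z) * Gamma z"
  proof
    have "(\<lambda>u. of_real y powr (- z) * G u) absolutely_integrable_on {0<..}"
      using G1 by (rule set_integrable_mult_right)
    thus "(\<lambda>u. \<bar>1/y\<bar> *\<^sub>R F (u / y)) absolutely_integrable_on {0<..}"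
      by (subst set_integrable_cong[OF refl refl eq]) auto
    have "integral {0<..} (\<lambda>u. \<bar>1/y\<bar> *\<^sub>R F (u / y)) = integral {0<..} (\<lambda>u. of_real y powr (- z) * G u)"
      by (rule integral_cong) (use eq in auto)
    also have "\<dots> = of_real y powr (- z) * Gamma z"
      using G2 by simp
    finally show "integral {0<..} (\<lambda>u. \<bar>1/y\<bar> *\<^sub>R F (u / y)) = of_real y powr (- z) * Gamma z" .
  qed
  have R: "F absolutely_integrable_on {0<..} \<and> integral {0<..} F = of_real y powr (- z) * Gamma z"
  proof -
    have d: "\<And>x. x \<in> {0<..} \<Longrightarrow> ((\<lambda>u. u/y) has_field_derivative 1/y) (at x within {0<..})"
      using y by (auto intro!: derivative_eq_intros)
    have inj: "inj_on (\<lambda>u. u/y) {0<..}" using y by (auto simp: inj_on_def)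
    show ?thesis
      using has_absolute_integral_change_of_variables_real[OF _ d inj, of F "of_real y powr (-z) * Gamma z"] L
      unfolding img by simp
  qed
  have meas: "(\<lambda>x. indicator {0<..} x *\<^sub>R F x) \<in> borel_measurable borel"
    unfolding F_def
    by (rule borel_measurable_continuous_on_indicator) (auto intro!: continuous_intros simp: complex_nonpos_Reals_iff)
  have si: "set_integrable lborel {0<..} F"
    using R meas by (intro lborel_from_lebesgue) auto
  thus "set_integrable lborel {0<..} (\<lambda>x. complex_of_real x powr (z - 1) * of_real (exp (- x * y)))"
    unfolding F_def .
  show "(LINT x:{0<..}|lborel. complex_of_real x powr (z - 1) * of_real (exp (- x * y)))
           = of_real y powr (- z) * Gamma z"
    using set_borel_integral_eq_integral(2)[OF si] R unfolding F_def by simp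
qed

lemma gamma_scaled_real:
  fixes r y :: real
  assumes r: "r > 0" and y: "y > 0"
  shows "set_integrable lborel {0<..} (\<lambda>x. x powr (r - 1) * exp (- x * y))"
    and "(LINT x:{0<..}|lborel. x powr (r - 1) * exp (- x * y)) = y powr (- r) * Gamma r"
proof -
  have eq: "complex_of_real x powr (complex_of_real r - 1) * of_real (exp (- x * y))
            = complex_of_real (x powr (r - 1) * exp (- x * y))" if "x \<in> {0<..}" for x
  proof -
    have "complex_of_real x powr (complex_of_real r - 1) = of_real (x powr (r - 1))"
      using powr_of_real[of x "r-1"] that by simp
    thus ?thesis by simp
  qed
  have ci: "set_integrable lborel {0<..} (\<lambda>x. complex_of_real (x powr (r - 1) * exp (- x * y)))"
    using gamma_scaled_complex(1)[of "of_real r" y] r y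
    by (subst set_integrable_cong[OF refl refl eq[symmetric]]) auto
  have "set_integrable lborel {0<..} (\<lambda>x. norm (complex_of_real (x powr (r - 1) * exp (- x * y))))"
    using ci by (rule set_integrable_norm)
  thus "set_integrable lborel {0<..} (\<lambda>x. x powr (r - 1) * exp (- x * y))"
    by (subst (asm) set_integrable_cong[OF refl refl, where f' = "\<lambda>x. x powr (r - 1) * exp (- x * y)"]) (auto simp del: of_real_mult simp add: norm_of_real)
  have "complex_of_real (LINT x:{0<..}|lborel. x powr (r - 1) * exp (- x * y))
        = (LINT x:{0<..}|lborel. complex_of_real x powr (complex_of_real r - 1) * of_real (exp (- x * y)))"
    by (subst set_integral_complex_of_real[symmetric], rule set_lebesgue_integral_cong) (use eq in auto)
  also have "\<dots> = of_real y powr (- of_real r) * Gamma (of_real r)"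
    using gamma_scaled_complex(2)[of "of_real r" y] r y by simp
  also have "\<dots> = of_real (y powr (- r) * Gamma r)"
    using y by (simp add: Gamma_complex_of_real powr_of_real[symmetric])
  finally show "(LINT x:{0<..}|lborel. x powr (r - 1) * exp (- x * y)) = y powr (- r) * Gamma r"
    by (simp only: of_real_eq_iff)
qed

lemma core_fubini:
  fixes z :: complex and h :: "real \<Rightarrow> real"
  assumes z: "Re z > 0"
    and hc: "continuous_on {0<..} h" and hnn: "\<And>y. y > 0 \<Longrightarrow> h y \<ge> 0"
    and hi: "set_integrable lborel {0<..} (\<lambda>y. y powr (- Re z) * h y)"
  shows "set_integrable lborel {0<..} (\<lambda>x. complex_of_real x powr (z - 1) *
            of_real (LINT y:{0<..}|lborel. exp (- x * y) * h y))"
    and "(LINT x:{0<..}|lborel. complex_of_real x powr (z - 1) *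
            of_real (LINT y:{0<..}|lborel. exp (- x * y) * h y))
         = Gamma z * (LINT y:{0<..}|lborel. complex_of_real y powr (- z) * of_real (h y))"
proof -
  define A where "A = ({0<..} :: real set)"
  define Q where "Q = (\<lambda>(y::real) (x::real). indicator (A \<times> A) (y, x) *\<^sub>R
                    (complex_of_real x powr (z - 1) * of_real (exp (- x * y) * h y)))"
  have meas: "case_prod Q \<in> borel_measurable (lborel \<Otimes>\<^sub>M lborel)"
  proof -
    have "(\<lambda>p. indicator (A \<times> A) p *\<^sub>R
            (complex_of_real (snd p) powr (z - 1) * of_real (exp (- snd p * fst p) * h (fst p))))
          \<in> borel_measurable borel"
      unfolding A_def
    proof (rule borel_measurable_continuous_on_indicator)
      show "({0<..} :: real set) \<times> ({0<..} :: real set) \<in> sets borel" by (auto intro!: borel_open open_Times open_greaterThan)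
      have c1: "continuous_on ({0<..} \<times> {0<..}) (\<lambda>p::real\<times>real. h (fst p))"
        by (rule continuous_on_compose2[OF hc]) (auto intro!: continuous_intros)
      show "continuous_on ({0<..} \<times> {0<..}) (\<lambda>p::real\<times>real.
            complex_of_real (snd p) powr (z - 1) * of_real (exp (- snd p * fst p) * h (fst p)))"
        by (auto intro!: continuous_intros c1 simp: complex_nonpos_Reals_iff)
    qed
    thus ?thesis unfolding lborel_prod Q_def by (simp add: case_prod_beta' measurable_lborel1)
  qed
  have ReG: "Gamma (Re z) > 0" using z by simp
  have integ1: "integrable lborel (\<lambda>y. \<integral>x. norm (case_prod Q (y, x)) \<partial>lborel)"
  proof -
    have eq: "(\<integral>x. norm (case_prod Q (y, x)) \<partial>lborel) = indicator A y * (Gamma (Re z) * (y powr (- Re z) * h y))" for y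
    proof (cases "y > 0")
      case True
      have "(\<integral>x. norm (case_prod Q (y, x)) \<partial>lborel) =
            (\<integral>x. h y * (indicator A x *\<^sub>R (x powr (Re z - 1) * exp (- x * y))) \<partial>lborel)"
      proof (rule Bochner_Integration.integral_cong[OF refl])
        fix x :: real
        show "norm (case_prod Q (y, x)) = h y * (indicator A x *\<^sub>R (x powr (Re z - 1) * exp (- x * y)))"
          using True hnn[OF True]
          by (auto simp: Q_def A_def indicator_def norm_mult norm_powr_real_powr abs_mult)
      qed
      also have "\<dots> = h y * (y powr (- Re z) * Gamma (Re z))"
        using gamma_scaled_real(2)[OF z True] by (simp add: set_lebesgue_integral_def A_def)
      finally show ?thesis using True by (simp add: A_def)
    next
      case False
      thus ?thesis by (simp add: Q_def A_def)
    qed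
    show ?thesis unfolding eq
      using set_integrable_mult_right[OF hi, of "Gamma (Re z)"]
      by (simp add: set_integrable_def A_def)
  qed
  have integ2: "AE y in lborel. integrable lborel (\<lambda>x. case_prod Q (y, x))"
  proof (rule AE_I2)
    fix y :: real
    show "integrable lborel (\<lambda>x. case_prod Q (y, x))"
    proof (cases "y > 0")
      case True
      have "integrable lborel (\<lambda>x. of_real (h y) * (indicator A x *\<^sub>R
               (complex_of_real x powr (z - 1) * of_real (exp (- x * y)))))"
        using Bochner_Integration.integrable_mult_right[OF gamma_scaled_complex(1)[OF z True, unfolded set_integrable_def], of "of_real (h y)"]
        unfolding A_def by simp
      moreover have "(\<lambda>x. case_prod Q (y, x)) = (\<lambda>x. of_real (h y) * (indicator A x *\<^sub>R
               (complex_of_real x powr (z - 1) * of_real (exp (- x * y)))))"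
        using True by (auto simp: Q_def A_def indicator_def fun_eq_iff)
      ultimately show ?thesis by simp
    next
      case False
      thus ?thesis by (simp add: Q_def A_def)
    qed
  qed
  have int: "integrable (lborel \<Otimes>\<^sub>M lborel) (case_prod Q)"
    by (rule lborel_pair.Fubini_integrable[OF meas integ1 integ2])
  have inner1: "(\<integral>y. Q y x \<partial>lborel) = indicator A x *\<^sub>R (complex_of_real x powr (z - 1) *
            of_real (LINT y:{0<..}|lborel. exp (- x * y) * h y))" for x
  proof (cases "x > 0")
    case True
    have "(\<integral>y. Q y x \<partial>lborel) = (\<integral>y. complex_of_real x powr (z - 1) *
             of_real (indicator A y *\<^sub>R (exp (- x * y) * h y)) \<partial>lborel)"
      by (rule Bochner_Integration.integral_cong[OF refl]) (use True in \<open>auto simp: Q_def A_def indicator_def\<close>)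
    also have "\<dots> = complex_of_real x powr (z - 1) * of_real (LINT y:{0<..}|lborel. exp (- x * y) * h y)"
      by (simp only: integral_mult_right_zero integral_complex_of_real set_lebesgue_integral_def A_def)
    finally show ?thesis using True by (simp add: A_def)
  next
    case False
    thus ?thesis by (simp add: Q_def A_def)
  qed
  have inner2: "(\<integral>x. Q y x \<partial>lborel) = indicator A y *\<^sub>R (Gamma z * (complex_of_real y powr (- z) * of_real (h y)))" for y
  proof (cases "y > 0")
    case True
    have "(\<integral>x. Q y x \<partial>lborel) = (\<integral>x. of_real (h y) * (indicator A x *\<^sub>R
               (complex_of_real x powr (z - 1) * of_real (exp (- x * y)))) \<partial>lborel)"
      by (rule Bochner_Integration.integral_cong[OF refl]) (use True in \<open>auto simp: Q_def A_def indicator_def\<close>)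
    also have "\<dots> = of_real (h y) * (of_real y powr (- z) * Gamma z)"
      using gamma_scaled_complex(2)[OF z True]
      by (simp only: integral_mult_right_zero set_lebesgue_integral_def A_def)
    finally show ?thesis using True by (simp add: A_def mult_ac)
  next
    case False
    thus ?thesis by (simp add: Q_def A_def)
  qed
  have "integrable lborel (\<lambda>x. \<integral>y. Q y x \<partial>lborel)"
    by (rule lborel_pair.integrable_snd[OF int])
  thus si: "set_integrable lborel {0<..} (\<lambda>x. complex_of_real x powr (z - 1) *
            of_real (LINT y:{0<..}|lborel. exp (- x * y) * h y))"
    unfolding inner1 set_integrable_def A_def .
  have "(\<integral>x. (\<integral>y. Q y x \<partial>lborel) \<partial>lborel) = (\<integral>y. (\<integral>x. Q y x \<partial>lborel) \<partial>lborel)"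
    by (rule lborel_pair.Fubini_integral[OF int])
  thus "(LINT x:{0<..}|lborel. complex_of_real x powr (z - 1) *
            of_real (LINT y:{0<..}|lborel. exp (- x * y) * h y))
         = Gamma z * (LINT y:{0<..}|lborel. complex_of_real y powr (- z) * of_real (h y))"
    unfolding inner1 inner2 set_lebesgue_integral_def A_def
    by (simp add: scaleR_conv_of_real mult_ac)
qed

lemma beta_complex:
  fixes m :: real and \<beta> :: complex
  assumes m: "m > 0" and b1: "Re \<beta> > 0" and b2: "Re \<beta> < m"
  shows "set_integrable lborel {0<..} (\<lambda>t. complex_of_real t powr (\<beta> - 1) * of_real ((1 + t) powr (- m)))"
    and "(LINT t:{0<..}|lborel. complex_of_real t powr (\<beta> - 1) * of_real ((1 + t) powr (- m)))
           = Gamma \<beta> * Gamma (of_real m - \<beta>) / of_real (Gamma m)"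
proof -
  define h where "h = (\<lambda>v::real. v powr (m - 1) * exp (- v))"
  have hc: "continuous_on {0<..} h" unfolding h_def by (auto intro!: continuous_intros)
  have hnn: "\<And>y. y > 0 \<Longrightarrow> h y \<ge> 0" unfolding h_def by simp
  have hi: "set_integrable lborel {0<..} (\<lambda>y. y powr (- Re \<beta>) * h y)"
  proof -
    have "set_integrable lborel {0<..} (\<lambda>x. x powr ((m - Re \<beta>) - 1) * exp (- x * 1))"
      by (rule gamma_scaled_real(1)) (use b2 in auto)
    thus ?thesis
      by (subst set_integrable_cong[OF refl refl, where f' = "\<lambda>x. x powr ((m - Re \<beta>) - 1) * exp (- x * 1)"])
         (auto simp: h_def powr_add[symmetric] mult.assoc diff_diff_eq add.commute)
  qed
  have inner: "(LINT v:{0<..}|lborel. exp (- t * v) * h v) = (1 + t) powr (- m) * Gamma m" if t: "t > 0" for t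
  proof -
    have "(LINT v:{0<..}|lborel. exp (- t * v) * h v) = (LINT v:{0<..}|lborel. v powr (m - 1) * exp (- v * (1 + t)))"
      by (rule set_lebesgue_integral_cong) (auto simp: h_def algebra_simps simp flip: exp_add)
    also have "\<dots> = (1 + t) powr (- m) * Gamma m"
      by (rule gamma_scaled_real(2)) (use m t in auto)
    finally show ?thesis .
  qed
  have C1: "set_integrable lborel {0<..} (\<lambda>x. complex_of_real x powr (\<beta> - 1) *
            of_real (LINT y:{0<..}|lborel. exp (- x * y) * h y))"
    by (rule core_fubini(1)[of \<beta> h]) (use b1 hc hnn hi in auto)
  have C2: "(LINT x:{0<..}|lborel. complex_of_real x powr (\<beta> - 1) *
            of_real (LINT y:{0<..}|lborel. exp (- x * y) * h y))
         = Gamma \<beta> * (LINT y:{0<..}|lborel. complex_of_real y powr (- \<beta>) * of_real (h y))"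
    by (rule core_fubini(2)[of \<beta> h]) (use b1 hc hnn hi in auto)
  have eqf: "complex_of_real t powr (\<beta> - 1) * of_real (LINT y:{0<..}|lborel. exp (- t * y) * h y)
        = of_real (Gamma m) * (complex_of_real t powr (\<beta> - 1) * of_real ((1 + t) powr (- m)))"
    if "t \<in> {0<..}" for t
    using that inner[of t] by (simp del: of_real_mult add: of_real_mult[symmetric] mult_ac)
  have GZ: "complex_of_real (Gamma m) \<noteq> 0" using Gamma_real_pos[OF m] by simp
  have si: "set_integrable lborel {0<..} (\<lambda>t. of_real (Gamma m) * (complex_of_real t powr (\<beta> - 1) * of_real ((1 + t) powr (- m))))"
    using C1 by (subst (asm) set_integrable_cong[OF refl refl eqf]) auto
  thus "set_integrable lborel {0<..} (\<lambda>t. complex_of_real t powr (\<beta> - 1) * of_real ((1 + t) powr (- m)))"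
    using GZ by simp
  have eqg: "complex_of_real v powr (- \<beta>) * of_real (h v) =
             complex_of_real v powr ((of_real m - \<beta>) - 1) * of_real (exp (- v * 1))" if "v \<in> {0<..}" for v
  proof -
    have v: "v > 0" using that by simp
    have "complex_of_real v powr (- \<beta>) * of_real (h v) =
          exp (- \<beta> * of_real (ln v)) * (exp (of_real ((m - 1) * ln v)) * exp (- of_real v))"
      using v by (simp add: h_def powr_def Ln_of_real flip: exp_of_real)
    also have "\<dots> = exp (- \<beta> * of_real (ln v) + of_real ((m - 1) * ln v) + (- of_real v))"
      by (simp only: exp_add mult.assoc)
    also have "- \<beta> * of_real (ln v) + of_real ((m - 1) * ln v) + (- of_real v) =
               ((of_real m - \<beta>) - 1) * of_real (ln v) + (- of_real v)"
      by (simp add: algebra_simps)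
    also have "exp \<dots> = complex_of_real v powr ((of_real m - \<beta>) - 1) * of_real (exp (- v * 1))"
      using v by (simp only: exp_add) (simp add: cpow_pos exp_of_real[symmetric])
    finally show ?thesis .
  qed
  have "(LINT y:{0<..}|lborel. complex_of_real y powr (- \<beta>) * of_real (h y)) = Gamma (of_real m - \<beta>)"
  proof -
    have "(LINT y:{0<..}|lborel. complex_of_real y powr (- \<beta>) * of_real (h y)) =
          (LINT y:{0<..}|lborel. complex_of_real y powr ((of_real m - \<beta>) - 1) * of_real (exp (- y * 1)))"
      by (rule set_lebesgue_integral_cong) (use eqg in auto)
    also have "\<dots> = Gamma (of_real m - \<beta>)"
      using gamma_scaled_complex(2)[of "of_real m - \<beta>" 1] b2 by simp
    finally show ?thesis .
  qed
  moreover have "(LINT t:{0<..}|lborel. of_real (Gamma m) * (complex_of_real t powr (\<beta> - 1) * of_real ((1 + t) powr (- m))))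
     = (LINT x:{0<..}|lborel. complex_of_real x powr (\<beta> - 1) *
            of_real (LINT y:{0<..}|lborel. exp (- x * y) * h y))"
    by (rule set_lebesgue_integral_cong) (use eqf in auto)
  ultimately have "(LINT t:{0<..}|lborel. of_real (Gamma m) * (complex_of_real t powr (\<beta> - 1) * of_real ((1 + t) powr (- m))))
       = Gamma \<beta> * Gamma (of_real m - \<beta>)"
    using C2 by simp
  thus "(LINT t:{0<..}|lborel. complex_of_real t powr (\<beta> - 1) * of_real ((1 + t) powr (- m)))
           = Gamma \<beta> * Gamma (of_real m - \<beta>) / of_real (Gamma m)"
    using GZ by (simp add: field_simps)
qed



lemma pointwise_identity:
  fixes K :: nat and c r J :: real and s :: complex
  assumes c: "c > 0" and r: "r > 0"
  shows "complex_of_real (real K / (r * sqrt pi) * (c * r^2) powr (real K / 2) * (1 / Gamma ((real K + 1) / 2) * J))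
            * of_real r powr (s - 1)
         = (of_real (real K / (2 * sqrt pi * Gamma ((real K + 1) / 2))) * of_real c powr ((1 - s) / 2))
            * (\<bar>2 * c * r\<bar> *\<^sub>R (of_real (c * r^2) powr ((of_nat K + s - 1) / 2 - 1) * of_real J))"
proof -
  define L where "L = ln r"
  define lc where "lc = ln c"
  define Q where "Q = real K / (sqrt pi * Gamma ((real K + 1) / 2)) * J"
  have rL: "r = exp L" using r by (simp add: L_def)
  have cL: "c = exp lc" using c by (simp add: lc_def)
  have lx: "ln (c * r^2) = lc + 2 * L" using c r by (simp add: L_def lc_def ln_mult ln_realpow)
  have e1: "(c * r^2) powr (real K / 2) = exp (real K / 2 * (lc + 2 * L))"
    using c r lx by (simp add: powr_def)
  have e2: "of_real r powr (s - 1) = exp ((s - 1) * of_real L)" using r by (simp add: cpow_pos L_def)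
  have e3: "of_real (c * r^2) powr ((of_nat K + s - 1) / 2 - 1) = exp (((of_nat K + s - 1) / 2 - 1) * of_real (lc + 2 * L))"
    using c r by (subst cpow_pos) (auto simp: lx)
  have e4: "of_real c powr ((1 - s) / 2) = exp ((1 - s) / 2 * of_real lc)" using c by (simp add: cpow_pos lc_def)
  have LHS: "complex_of_real (real K / (r * sqrt pi) * (c * r^2) powr (real K / 2) * (1 / Gamma ((real K + 1) / 2) * J))
            * of_real r powr (s - 1) = of_real Q * (exp (- of_real L) * exp (of_real (real K / 2 * (lc + 2 * L))) * exp ((s - 1) * of_real L))"
    unfolding e1 e2 Q_def
    by (subst (1) rL) (simp add: exp_minus field_simps flip: exp_of_real)
  have RHS: "(of_real (real K / (2 * sqrt pi * Gamma ((real K + 1) / 2))) * of_real c powr ((1 - s) / 2))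
            * (\<bar>2 * c * r\<bar> *\<^sub>R (of_real (c * r^2) powr ((of_nat K + s - 1) / 2 - 1) * of_real J))
           = of_real Q * (exp ((1 - s) / 2 * of_real lc) * exp (of_real lc) * exp (of_real L) *
                exp (((of_nat K + s - 1) / 2 - 1) * of_real (lc + 2 * L)))"
  proof -
    have a: "\<bar>2 * c * r\<bar> = 2 * (exp lc * exp L)" using c r rL cL by simp
    show ?thesis unfolding e3 e4 Q_def a
      by (simp add: scaleR_conv_of_real field_simps flip: exp_of_real)
  qed
  have E: "- of_real L + of_real (real K / 2 * (lc + 2 * L)) + (s - 1) * of_real L =
           (1 - s) / 2 * of_real lc + of_real lc + of_real L + ((of_nat K + s - 1) / 2 - 1) * of_real (lc + 2 * L)"
    by (simp add: field_simps)
  show ?thesis unfolding LHS RHS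
    using arg_cong[OF E, of exp] by (simp only: exp_add)
qed

lemma Re_pos_not_nonpos_Ints: "Re (z::complex) > 0 \<Longrightarrow> z \<notin> \<int>\<^sub>\<le>\<^sub>0"
  by (auto elim!: nonpos_Ints_cases)

lemma const_identity:
  fixes K N :: nat and \<sigma> :: real and s :: complex
  assumes K: "K \<ge> 1" and N: "N \<ge> 1" and \<sigma>: "\<sigma> > 0" and s1: "1 - real K < Re s" and s2: "Re s < 2"
  shows "(of_real (real K / (2 * sqrt pi * Gamma ((real K + 1) / 2))) * of_real (real N / (2 * \<sigma>^2)) powr ((1 - s) / 2))
          * (Gamma ((of_nat K + s - 1) / 2) * (Gamma (1 - s / 2) * Gamma (of_real (real K / 2 + 1) - (1 - s / 2))
               / of_real (Gamma (real K / 2 + 1))))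
       = complex_of_real (\<sigma> / sqrt (2 * real N)) powr (s - 1) * Gamma (1 - s / 2) * Gamma (of_nat K + s - 1)
           / (complex_of_real (sqrt pi) * Gamma (of_nat K))"
proof -
  define w where "w = (of_nat K + s - 1) / (2::complex)"
  define c where "c = real N / (2 * \<sigma>^2)"
  have c: "c > 0" using N \<sigma> by (simp add: c_def)
  have w2: "of_real (real K / 2 + 1) - (1 - s / 2) = w + 1/2" by (simp add: w_def field_simps)
  have Rew: "Re w > 0" using s1 by (simp add: w_def)
  have dup1: "Gamma w * Gamma (w + 1/2) = exp ((1 - 2*w) * of_real (ln 2)) * of_real (sqrt pi) * Gamma (2*w)"
    by (rule Gamma_legendre_duplication) (use Rew in \<open>auto intro!: Re_pos_not_nonpos_Ints\<close>)
  define a where "a = complex_of_real ((real K + 1) / 2)"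
  have Rea: "Re a > 0" by (simp add: a_def)
  have dup2: "Gamma a * Gamma (a + 1/2) = exp ((1 - 2*a) * of_real (ln 2)) * of_real (sqrt pi) * Gamma (2*a)"
    by (rule Gamma_legendre_duplication) (use Rea in \<open>auto intro!: Re_pos_not_nonpos_Ints\<close>)
  have a2: "a + 1/2 = of_real (real K / 2 + 1)" by (simp add: a_def field_simps)
  have GK1: "Gamma (2*a) = of_nat K * Gamma (of_nat K)"
  proof -
    have "2 * a = of_nat K + 1" by (simp add: a_def field_simps)
    moreover have "of_nat K \<notin> (\<int>\<^sub>\<le>\<^sub>0 :: complex set)" using K by (intro Re_pos_not_nonpos_Ints) simp
    ultimately show ?thesis by (simp add: Gamma_plus1)
  qed
  have GKnz: "Gamma (of_nat K :: complex) \<noteq> 0" using K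
    by (simp add: Gamma_eq_zero_iff Re_pos_not_nonpos_Ints)
  have Ga: "complex_of_real (Gamma ((real K + 1) / 2)) = Gamma a" unfolding a_def Gamma_complex_of_real by (rule refl)
  have Gm: "complex_of_real (Gamma (real K / 2 + 1)) = Gamma (a + 1/2)" unfolding a2 Gamma_complex_of_real by (rule refl)
  have Ganz: "Gamma a \<noteq> 0" using Rea by (simp add: Gamma_eq_zero_iff Re_pos_not_nonpos_Ints)
  have Gmnz: "Gamma (a + 1/2) \<noteq> 0" unfolding Gamma_eq_zero_iff a2 by (rule Re_pos_not_nonpos_Ints) (simp add: add_nonneg_pos)
  have spnz: "complex_of_real (sqrt pi) \<noteq> 0" by simp
  have Knz: "(of_nat K :: complex) \<noteq> 0" using K by simp
  have P: "of_real c powr ((1 - s) / 2) * exp ((1 - s) * of_real (ln 2)) = complex_of_real (\<sigma> / sqrt (2 * real N)) powr (s - 1)"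
  proof -
    have lnc: "ln c = ln (real N) - ln 2 - 2 * ln \<sigma>" using N \<sigma> by (simp add: c_def ln_div ln_mult ln_realpow)
    have lns: "ln (\<sigma> / sqrt (2 * real N)) = ln \<sigma> - (ln 2 + ln (real N)) / 2"
      using N \<sigma> by (simp add: ln_div ln_sqrt ln_mult)
    have "of_real c powr ((1 - s) / 2) * exp ((1 - s) * of_real (ln 2)) =
          exp ((1 - s) / 2 * of_real (ln c) + (1 - s) * of_real (ln 2))"
      using c by (simp add: cpow_pos exp_add)
    also have "(1 - s) / 2 * of_real (ln c) + (1 - s) * of_real (ln 2) = (s - 1) * of_real (ln (\<sigma> / sqrt (2 * real N)))"
      unfolding lnc lns by (simp add: field_simps)
    also have "exp \<dots> = complex_of_real (\<sigma> / sqrt (2 * real N)) powr (s - 1)"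
      by (rule cpow_pos[symmetric]) (use N \<sigma> in simp)
    finally show ?thesis .
  qed
  have e: "exp ((1 - 2*w) * of_real (ln 2)) = 2 * exp ((1 - s) * of_real (ln 2)) * exp ((1 - 2*a) * of_real (ln 2))"
  proof -
    have "(1 - 2*w) * of_real (ln 2) = of_real (ln 2) + (1 - s) * of_real (ln 2) + (1 - 2*a) * of_real (ln 2)"
      by (simp add: w_def a_def field_simps)
    thus ?thesis by (simp add: exp_add exp_of_real)
  qed
  have 2: "2 * w = of_nat K + s - 1" by (simp add: w_def)
  define Cp where "Cp = complex_of_real c powr ((1 - s) / 2)"
  define E where "E = exp ((1 - s) * complex_of_real (ln 2))"
  define e2 where "e2 = exp ((1 - 2*a) * complex_of_real (ln 2))"
  define sp where "sp = complex_of_real (sqrt pi)"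
  have X: "Gamma w * Gamma (w + 1/2) = 2 * E * e2 * sp * Gamma (of_nat K + s - 1)"
    using dup1 2 e by (simp add: E_def e2_def sp_def)
  have Y: "Gamma a * Gamma (a + 1/2) = e2 * sp * (of_nat K * Gamma (of_nat K))"
    using dup2 GK1 by (simp add: e2_def sp_def)
  have e2nz: "e2 \<noteq> 0" by (simp add: e2_def)
  have spnz': "sp \<noteq> 0" by (simp add: sp_def)
  have L1: "complex_of_real (real K / (2 * sqrt pi * Gamma ((real K + 1) / 2))) = of_nat K / (2 * sp * Gamma a)"
    by (simp add: sp_def Ga[symmetric])
  have "(of_real (real K / (2 * sqrt pi * Gamma ((real K + 1) / 2))) * of_real (real N / (2 * \<sigma>^2)) powr ((1 - s) / 2))
          * (Gamma ((of_nat K + s - 1) / 2) * (Gamma (1 - s / 2) * Gamma (of_real (real K / 2 + 1) - (1 - s / 2))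
               / of_real (Gamma (real K / 2 + 1))))
        = of_nat K / (2 * sp * Gamma a) * Cp * (Gamma w * (Gamma (1 - s / 2) * Gamma (w + 1/2) / Gamma (a + 1/2)))"
    unfolding L1 c_def[symmetric] Cp_def w_def[symmetric] w2 Gm ..
  also have "\<dots> = of_nat K * Cp * Gamma (1 - s / 2) * (Gamma w * Gamma (w + 1/2)) / (2 * sp * (Gamma a * Gamma (a + 1/2)))"
    using Ganz Gmnz spnz' by (simp add: field_simps)
  also have "\<dots> = Cp * E * Gamma (1 - s / 2) * Gamma (of_nat K + s - 1) / (sp * Gamma (of_nat K))"
    unfolding X Y using e2nz spnz' GKnz Knz by (simp add: field_simps)
  also have "Cp * E = complex_of_real (\<sigma> / sqrt (2 * real N)) powr (s - 1)"
    using P by (simp add: Cp_def E_def)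
  finally show ?thesis by (simp add: sp_def)
qed



lemma main_s:
  fixes K N :: nat and \<sigma> :: real and s :: complex
  assumes K: "K \<ge> 1" and N: "N \<ge> 1" and \<sigma>: "\<sigma> > 0" and s1: "1 - real K < Re s" and s2: "Re s < 2"
  shows "set_integrable lborel {0<..}
              (\<lambda>r. complex_of_real (parabolic_prior K N \<sigma> r) * complex_of_real r powr (s - 1)) \<and>
            (LINT r:{0<..}|lborel.
               complex_of_real (parabolic_prior K N \<sigma> r) * complex_of_real r powr (s - 1))
            = complex_of_real (\<sigma> / sqrt (2 * real N)) powr (s - 1)
                * Gamma (1 - s / 2) * Gamma (of_nat K + s - 1)
                / (complex_of_real (sqrt pi) * Gamma (of_nat K))"
proof -
  define c where "c = real N / (2 * \<sigma>^2)"
  define a where "a = (real K + 1) / 2"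
  define m where "m = real K / 2 + 1"
  define w where "w = (of_nat K + s - 1) / (2::complex)"
  define h where "h = (\<lambda>t::real. t powr (a - 1) * (1 + t) powr (- m))"
  define J where "J = (\<lambda>x::real. LINT t:{0<..}|lborel. exp (- x * t) * h t)"
  define \<Phi> where "\<Phi> = (\<lambda>x::real. complex_of_real x powr (w - 1) * of_real (J x))"
  define D where "D = of_real (real K / (2 * sqrt pi * Gamma ((real K + 1) / 2))) * complex_of_real c powr ((1 - s) / 2)"
  define T where "T = (\<lambda>r. complex_of_real (parabolic_prior K N \<sigma> r) * complex_of_real r powr (s - 1))"
  define S where "S = ({0<..} :: real set)"
  have c: "c > 0" using N \<sigma> by (simp add: c_def)
  have m: "m > 0" by (simp add: m_def add_nonneg_pos)
  have tri: "tricomiU a (1/2) x = 1 / Gamma a * J x" for x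
  proof -
    have "(LINT t:{0<..}|lborel. exp (- x * t) * t powr (a - 1) * (1 + t) powr (1 / 2 - a - 1)) = J x"
    proof -
      have ex: "1 / 2 - a - 1 = - m" by (simp add: a_def m_def field_simps)
      show ?thesis unfolding J_def h_def ex
        by (rule set_lebesgue_integral_cong) (auto simp: mult.assoc)
    qed
    thus ?thesis by (simp add: tricomiU_def)
  qed
  have TD: "T r = D * (\<bar>2 * c * r\<bar> *\<^sub>R \<Phi> (c * r^2))" if r: "r > 0" for r
  proof -
    have "parabolic_prior K N \<sigma> r = real K / (r * sqrt pi) * (c * r^2) powr (real K / 2) *
             (1 / Gamma ((real K + 1) / 2) * J (c * r^2))"
      unfolding parabolic_prior_def tri[unfolded a_def] by (simp add: c_def)
    thus ?thesis
      unfolding T_def D_def \<Phi>_def w_def using pointwise_identity[OF c r, of K "J (c * r^2)" s] by simp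
  qed
  have Rew: "Re w > 0" using s1 by (simp add: w_def)
  have hc: "continuous_on {0<..} h" unfolding h_def by (auto intro!: continuous_intros)
  have hnn: "\<And>y. y > 0 \<Longrightarrow> h y \<ge> 0" unfolding h_def by simp
  define \<beta> where "\<beta> = 1 - s / 2"
  have b1: "Re \<beta> > 0" using s2 by (simp add: \<beta>_def)
  have b2: "Re \<beta> < m" using s1 by (simp add: \<beta>_def m_def)
  have hi: "set_integrable lborel {0<..} (\<lambda>y. y powr (- Re w) * h y)"
  proof -
    have "set_integrable lborel {0<..} (\<lambda>t. complex_of_real t powr (of_real (Re \<beta>) - 1) * of_real ((1 + t) powr (- m)))"
      by (rule beta_complex(1)) (use m b1 b2 in auto)
    hence "set_integrable lborel {0<..} (\<lambda>t. norm (complex_of_real t powr (of_real (Re \<beta>) - 1) * of_real ((1 + t) powr (- m))))"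
      by (rule set_integrable_norm)
    moreover have "norm (complex_of_real t powr (of_real (Re \<beta>) - 1) * of_real ((1 + t) powr (- m))) = t powr (- Re w) * h t"
      if "t \<in> {0<..}" for t
    proof -
      have t: "t > 0" using that by simp
      have "norm (complex_of_real t powr (of_real (Re \<beta>) - 1) * of_real ((1 + t) powr (- m))) =
            t powr (Re \<beta> - 1) * (1 + t) powr (- m)"
        using t by (simp add: norm_mult norm_powr_real_powr)
      also have "Re \<beta> - 1 = - Re w + (a - 1)" by (simp add: \<beta>_def w_def a_def field_simps)
      also have "t powr (- Re w + (a - 1)) = t powr (- Re w) * t powr (a - 1)" by (rule powr_add)
      finally show ?thesis by (simp add: h_def mult.assoc)
    qed
    ultimately show ?thesis by (subst (asm) set_integrable_cong[OF refl refl]) auto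
  qed
  have C1: "set_integrable lborel {0<..} \<Phi>"
    unfolding \<Phi>_def J_def by (rule core_fubini(1)) (use Rew hc hnn hi in auto)
  have C2: "(LINT x:{0<..}|lborel. \<Phi> x) = Gamma w * (LINT y:{0<..}|lborel. complex_of_real y powr (- w) * of_real (h y))"
    unfolding \<Phi>_def J_def by (rule core_fubini(2)) (use Rew hc hnn hi in auto)
  have B: "(LINT y:{0<..}|lborel. complex_of_real y powr (- w) * of_real (h y))
            = Gamma \<beta> * Gamma (of_real m - \<beta>) / of_real (Gamma m)"
  proof -
    have "(LINT y:{0<..}|lborel. complex_of_real y powr (- w) * of_real (h y)) =
          (LINT t:{0<..}|lborel. complex_of_real t powr (\<beta> - 1) * of_real ((1 + t) powr (- m)))"
    proof (rule set_lebesgue_integral_cong)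
      show "({0<..}::real set) \<in> sets lborel" by simp
      show "\<forall>x. x \<in> {0<..} \<longrightarrow> complex_of_real x powr - w * complex_of_real (h x) =
                complex_of_real x powr (\<beta> - 1) * complex_of_real ((1 + x) powr - m)"
      proof (intro allI impI)
        fix t :: real assume "t \<in> {0<..}"
        hence t: "t > 0" by simp
        have "complex_of_real t powr - w * complex_of_real (t powr (a - 1)) =
              exp (- w * of_real (ln t) + of_real ((a - 1) * ln t))"
          using t by (simp only: exp_add) (simp add: powr_def Ln_of_real flip: exp_of_real)
        also have "- w * of_real (ln t) + of_real ((a - 1) * ln t) = (\<beta> - 1) * of_real (ln t)"
          by (simp add: w_def \<beta>_def a_def field_simps)
        also have "exp \<dots> = complex_of_real t powr (\<beta> - 1)" using t by (simp add: cpow_pos)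
        finally show "complex_of_real t powr - w * complex_of_real (h t) =
                complex_of_real t powr (\<beta> - 1) * complex_of_real ((1 + t) powr - m)"
          by (simp add: h_def mult.assoc[symmetric])
      qed
    qed
    also have "\<dots> = Gamma \<beta> * Gamma (of_real m - \<beta>) / of_real (Gamma m)"
      by (rule beta_complex(2)) (use m b1 b2 in auto)
    finally show ?thesis .
  qed
  have \<Psi>meas: "(\<lambda>x. indicator S x *\<^sub>R \<Phi> x) \<in> borel_measurable borel"
    using borel_measurable_integrable[OF C1[unfolded set_integrable_def]] by (simp add: S_def measurable_lborel1)
  have \<Phi>abs: "\<Phi> absolutely_integrable_on S"
    using C1 \<Psi>meas unfolding set_integrable_def S_def by (subst integrable_completion) (auto simp: measurable_lborel1)
  have \<Phi>int: "integral S \<Phi> = (LINT x:{0<..}|lborel. \<Phi> x)"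
    using set_borel_integral_eq_integral(2)[OF C1] by (simp add: S_def)
  have d: "\<And>x. x \<in> S \<Longrightarrow> ((\<lambda>r. c * r^2) has_field_derivative (2 * c * x)) (at x within S)"
    by (auto intro!: derivative_eq_intros)
  have inj: "inj_on (\<lambda>r. c * r^2) S"
    using c by (auto simp: inj_on_def S_def power2_eq_iff_nonneg)
  have img: "(\<lambda>r. c * r^2) ` S = S"
  proof
    show "(\<lambda>r. c * r^2) ` S \<subseteq> S" using c by (auto simp: S_def)
    show "S \<subseteq> (\<lambda>r. c * r^2) ` S"
    proof
      fix x assume "x \<in> S"
      hence x: "x > 0" by (simp add: S_def)
      have "c * (sqrt (x / c))^2 = x" using x c by simp
      moreover have "sqrt (x / c) \<in> S" using x c by (simp add: S_def)
      ultimately show "x \<in> (\<lambda>r. c * r^2) ` S" by (metis image_eqI)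
    qed
  qed
  have CV: "(\<lambda>r. \<bar>2 * c * r\<bar> *\<^sub>R \<Phi> (c * r^2)) absolutely_integrable_on S \<and>
            integral S (\<lambda>r. \<bar>2 * c * r\<bar> *\<^sub>R \<Phi> (c * r^2)) = (LINT x:{0<..}|lborel. \<Phi> x)"
    using has_absolute_integral_change_of_variables_real[OF _ d inj, of \<Phi> "LINT x:{0<..}|lborel. \<Phi> x"]
      \<Phi>abs \<Phi>int unfolding img by (simp add: S_def)
  have Tabs: "T absolutely_integrable_on S"
  proof -
    have "(\<lambda>r. D * (\<bar>2 * c * r\<bar> *\<^sub>R \<Phi> (c * r^2))) absolutely_integrable_on S"
      using CV by (intro set_integrable_mult_right) auto
    thus ?thesis
      by (subst set_integrable_cong[OF refl refl TD]) (auto simp: S_def)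
  qed
  have Tint: "integral S T = D * (LINT x:{0<..}|lborel. \<Phi> x)"
  proof -
    have "integral S T = integral S (\<lambda>r. D * (\<bar>2 * c * r\<bar> *\<^sub>R \<Phi> (c * r^2)))"
      by (rule integral_cong) (auto simp: S_def TD)
    also have "\<dots> = D * integral S (\<lambda>r. \<bar>2 * c * r\<bar> *\<^sub>R \<Phi> (c * r^2))"
      by (rule integral_mult_right)
    finally show ?thesis using CV by simp
  qed
  have Tmeas: "(\<lambda>r. indicator S r *\<^sub>R T r) \<in> borel_measurable borel"
  proof -
    have eq: "(\<lambda>r. indicator S r *\<^sub>R T r) =
              (\<lambda>r. (D * of_real (2 * c * r) * of_real (indicator S r)) * (indicator S (c * r^2) *\<^sub>R \<Phi> (c * r^2)))"
    proof
      fix r :: real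
      show "indicator S r *\<^sub>R T r =
              (D * of_real (2 * c * r) * of_real (indicator S r)) * (indicator S (c * r^2) *\<^sub>R \<Phi> (c * r^2))"
      proof (cases "r > 0")
        case True
        thus ?thesis using c by (simp add: S_def TD scaleR_conv_of_real abs_mult)
      next
        case False
        thus ?thesis by (simp add: S_def)
      qed
    qed
    have m1: "(\<lambda>r. indicator S (c * r^2) *\<^sub>R \<Phi> (c * r^2)) \<in> borel_measurable borel"
      using measurable_compose[OF _ \<Psi>meas, of "\<lambda>r. c * r^2" borel] by simp
    show ?thesis unfolding eq by (rule borel_measurable_times[OF _ m1]) (unfold S_def, measurable)
  qed
  have Tlb: "set_integrable lborel S T"
    by (rule lborel_from_lebesgue[OF Tabs Tmeas])
  have "(LINT r:S|lborel. T r) = D * (Gamma w * (Gamma \<beta> * Gamma (of_real m - \<beta>) / of_real (Gamma m)))"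
    using set_borel_integral_eq_integral(2)[OF Tlb] Tint C2 B by simp
  also have "\<dots> = complex_of_real (\<sigma> / sqrt (2 * real N)) powr (s - 1)
                * Gamma (1 - s / 2) * Gamma (of_nat K + s - 1)
                / (complex_of_real (sqrt pi) * Gamma (of_nat K))"
    unfolding D_def c_def w_def \<beta>_def m_def by (rule const_identity[OF K N \<sigma> s1 s2])
  finally show ?thesis using Tlb unfolding T_def S_def by simp
qed



theorem mainTheorem7:
  fixes K N :: nat and \<sigma> :: real
  assumes "K \<ge> 1" and "N \<ge> 1" and "\<sigma> > 0"
  shows "(\<forall>s::complex. 1 - real K < Re s \<and> Re s < 2 \<longrightarrow>
            set_integrable lborel {0<..}
              (\<lambda>r. complex_of_real (parabolic_prior K N \<sigma> r) * complex_of_real r powr (s - 1)) \<and>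
            (LINT r:{0<..}|lborel.
               complex_of_real (parabolic_prior K N \<sigma> r) * complex_of_real r powr (s - 1))
            = complex_of_real (\<sigma> / sqrt (2 * real N)) powr (s - 1)
                * Gamma (1 - s / 2) * Gamma (of_nat K + s - 1)
                / (complex_of_real (sqrt pi) * Gamma (of_nat K)))
         \<and> (\<forall>r>0. parabolic_prior K N \<sigma> r \<ge> 0)
         \<and> set_integrable lborel {0<..} (parabolic_prior K N \<sigma>)
         \<and> (LINT r:{0<..}|lborel. parabolic_prior K N \<sigma> r) = 1"
proof (intro conjI)
  show "\<forall>s::complex. 1 - real K < Re s \<and> Re s < 2 \<longrightarrow>
            set_integrable lborel {0<..}
              (\<lambda>r. complex_of_real (parabolic_prior K N \<sigma> r) * complex_of_real r powr (s - 1)) \<and>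
            (LINT r:{0<..}|lborel.
               complex_of_real (parabolic_prior K N \<sigma> r) * complex_of_real r powr (s - 1))
            = complex_of_real (\<sigma> / sqrt (2 * real N)) powr (s - 1)
                * Gamma (1 - s / 2) * Gamma (of_nat K + s - 1)
                / (complex_of_real (sqrt pi) * Gamma (of_nat K))"
    using main_s[OF assms] by blast
  show nn: "\<forall>r>0. parabolic_prior K N \<sigma> r \<ge> 0"
  proof (intro allI impI)
    fix r :: real assume r: "r > 0"
    have "tricomiU ((real K + 1) / 2) (1 / 2) x \<ge> 0" for x
    proof -
      have "(LINT t:{0<..}|lborel. exp (- x * t) * t powr ((real K + 1) / 2 - 1) * (1 + t) powr (1 / 2 - (real K + 1) / 2 - 1)) \<ge> 0"
        unfolding set_lebesgue_integral_def
        by (rule Bochner_Integration.integral_nonneg) (auto simp: indicator_def)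
      moreover have "Gamma ((real K + 1) / 2) > 0" by (intro Gamma_real_pos) (simp add: add_nonneg_pos)
      ultimately show ?thesis unfolding tricomiU_def by simp
    qed
    thus "parabolic_prior K N \<sigma> r \<ge> 0"
      unfolding parabolic_prior_def using r by simp
  qed
  have s1: "set_integrable lborel {0<..} (\<lambda>r. complex_of_real (parabolic_prior K N \<sigma> r) * complex_of_real r powr (1 - 1)) \<and>
            (LINT r:{0<..}|lborel. complex_of_real (parabolic_prior K N \<sigma> r) * complex_of_real r powr (1 - 1))
            = complex_of_real (\<sigma> / sqrt (2 * real N)) powr (1 - 1)
                * Gamma (1 - 1 / 2) * Gamma (of_nat K + 1 - 1)
                / (complex_of_real (sqrt pi) * Gamma (of_nat K))"
    by (rule main_s) (use assms in auto)
  have eq: "complex_of_real (parabolic_prior K N \<sigma> r) * complex_of_real r powr (1 - 1) = complex_of_real (parabolic_prior K N \<sigma> r)"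
    if "r \<in> {0<..}" for r
    using that by simp
  have ci: "set_integrable lborel {0<..} (\<lambda>r. complex_of_real (parabolic_prior K N \<sigma> r))"
    using s1 by (subst (asm) set_integrable_cong[OF refl refl eq]) auto
  have "set_integrable lborel {0<..} (\<lambda>r. norm (complex_of_real (parabolic_prior K N \<sigma> r)))"
    using ci by (rule set_integrable_norm)
  thus "set_integrable lborel {0<..} (parabolic_prior K N \<sigma>)"
    using nn by (subst (asm) set_integrable_cong[OF refl refl, where f' = "parabolic_prior K N \<sigma>"]) auto
  have "complex_of_real (LINT r:{0<..}|lborel. parabolic_prior K N \<sigma> r)
        = (LINT r:{0<..}|lborel. complex_of_real (parabolic_prior K N \<sigma> r) * complex_of_real r powr (1 - 1))"
    by (subst set_integral_complex_of_real[symmetric], rule set_lebesgue_integral_cong) (use eq in auto)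
  also have "\<dots> = 1"
  proof -
    have "\<sigma> / sqrt (2 * real N) \<noteq> 0" using assms by simp
    moreover have "Gamma (of_nat K :: complex) \<noteq> 0" using assms
      by (simp add: Gamma_eq_zero_iff Re_pos_not_nonpos_Ints)
    moreover have "Gamma (1 - 1 / 2 :: complex) = of_real (sqrt pi)"
      using Gamma_one_half_complex by simp
    ultimately show ?thesis using s1 by simp
  qed
  finally show "(LINT r:{0<..}|lborel. parabolic_prior K N \<sigma> r) = 1"
    by (simp only: of_real_eq_1_iff)
qed


end
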